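(* Let $V\in\mathcal{R}$. For every generating sequence $(u_m)$ of $V$, the sequence $(\rho_{u_m})$ is nondecreasing, so $\lim_{m\to\infty}\rho_{u_m}$ exists in $[0,+\infty]$; moreover this limit is the same for all generating sequences of $V$ (in particular it equals $\lim_n\rho_{v_n}$ for the canonical generating sequence $(v_n)$ of $V$).
   Context: $\mathcal{F}$ is the set of finite words over $\{0,1\}$ that start and end with $0$. For a finite word $\alpha$, $Y(\alpha)$, $Z(\alpha)$ are the numbers of $1$s and $0$s in $\alpha$ and $\rho_\alpha=Y(\alpha)/Z(\alpha)$. For $u,v\in\mathcal{F}$, $u$ is built from $v$ if $u=v1^{a_1}v\cdots v1^{a_{q-1}}v$ for some $q\ge2$ and nonnegative integers $a_i$; it is built simply from $v$ if moreover $a_1=\dots=a_{q-1}$. A generating sequence is a sequence $(v_n)$ in $\mathcal{F}$ with $v_0=0$ and each $v_{n+1}$ built from $v_n$. An infinite word $V\in\{0,1\}^{\mathbb{N}}$ is a rank one word if there is a generating sequence $(v_n)$ with $V\upharpoonright\mathrm{lh}(v_n)=v_n$ for all $n$; $\mathcal{R}$ is the set of rank one words that are aperiodic (nondegenerate). $V$ is built from $v\in\mathcal{F}$ if $V=v1^{a_1}v1^{a_2}v\cdots$ for nonnegative integers $a_i$. An element $v\in\mathcal{F}$ belongs to the canonical generating sequence of $V$ if $V$ is built from $v$ and there are no $u,w\in\mathcal{F}$ with $\mathrm{lh}(u)<\mathrm{lh}(v)<\mathrm{lh}(w)$, $V$ built from both $u$ and $w$, $w$ built from $u$, $u$ built from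 $v$, and $w$ built simply from $u$; these elements, listed by increasing length, form a generating sequence of $V$ (the canonical generating sequence). *)

theory Defs
  imports "HOL-Analysis.Analysis"
begin

text \<open>Finite words over {0,1} are bool lists (False = 0, True = 1);
infinite words are functions nat => bool.\<close>

definition inF :: "bool list \<Rightarrow> bool" where
  "inF w \<longleftrightarrow> w \<noteq> [] \<and> hd w = False \<and> last w = False"

definition Yc :: "bool list \<Rightarrow> nat" where
  "Yc w = length (filter (\<lambda>b. b) w)"

definition Zc :: "bool list \<Rightarrow> nat" where
  "Zc w = length (filter (\<lambda>b. \<not> b) w)"

definition rho :: "bool list \<Rightarrow> real" where
  "rho w = real (Yc w) / real (Zc w)"

text \<open>u = v 1^(a_1) v ... 1^(a_(q-1)) v with q >= 2 (as lists: as = [a_1,...,a_(q-1)], nonempty).\<close>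
definition built_from :: "bool list \<Rightarrow> bool list \<Rightarrow> bool" where
  "built_from u v \<longleftrightarrow>
     (\<exists>as :: nat list. as \<noteq> [] \<and> u = v @ concat (map (\<lambda>a. replicate a True @ v) as))"

definition built_simply :: "bool list \<Rightarrow> bool list \<Rightarrow> bool" where
  "built_simply u v \<longleftrightarrow>
     (\<exists>q a :: nat. q \<ge> 2 \<and> u = v @ concat (replicate (q - 1) (replicate a True @ v)))"

definition is_prefix :: "bool list \<Rightarrow> (nat \<Rightarrow> bool) \<Rightarrow> bool" where
  "is_prefix w V \<longleftrightarrow> (\<forall>i < length w. V i = w ! i)"

definition generating_seq :: "(nat \<Rightarrow> bool list) \<Rightarrow> bool" where
  "generating_seq vs \<longleftrightarrow>
     vs 0 = [False] \<and> (\<forall>n. inF (vs n)) \<and> (\<forall>n. built_from (vs (Suc n)) (vs n))"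

definition generating_seq_of :: "(nat \<Rightarrow> bool) \<Rightarrow> (nat \<Rightarrow> bool list) \<Rightarrow> bool" where
  "generating_seq_of V vs \<longleftrightarrow> generating_seq vs \<and> (\<forall>n. is_prefix (vs n) V)"

definition rank_one :: "(nat \<Rightarrow> bool) \<Rightarrow> bool" where
  "rank_one V \<longleftrightarrow> (\<exists>vs. generating_seq_of V vs)"

definition aperiodic :: "(nat \<Rightarrow> bool) \<Rightarrow> bool" where
  "aperiodic V \<longleftrightarrow> \<not> (\<exists>p N. p > 0 \<and> (\<forall>i \<ge> N. V (i + p) = V i))"

definition R_words :: "(nat \<Rightarrow> bool) set" where
  "R_words = {V. rank_one V \<and> aperiodic V}"

definition inf_built_from :: "(nat \<Rightarrow> bool) \<Rightarrow> bool list \<Rightarrow> bool" where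
  "inf_built_from V v \<longleftrightarrow>
     (\<exists>a :: nat \<Rightarrow> nat. \<forall>k.
        is_prefix (v @ concat (map (\<lambda>i. replicate (a i) True @ v) [0..<k])) V)"

definition canonical_set :: "(nat \<Rightarrow> bool) \<Rightarrow> bool list set" where
  "canonical_set V = {v. inF v \<and> inf_built_from V v \<and>
     \<not> (\<exists>u w. inF u \<and> inF w \<and> length u < length v \<and> length v < length w \<and>
            inf_built_from V u \<and> inf_built_from V w \<and>
            built_from w u \<and> built_from v u \<and> built_simply w u)}"

end

theory Submission
  imports Defs
begin

lemma Yc_app[simp]: "Yc (xs @ ys) = Yc xs + Yc ys" by (simp add: Yc_def)
lemma Zc_app[simp]: "Zc (xs @ ys) = Zc xs + Zc ys" by (simp add: Zc_def)
lemma Yc_rep[simp]: "Yc (replicate a True) = a" by (simp add: Yc_def)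
lemma Zc_rep[simp]: "Zc (replicate a True) = 0" by (simp add: Zc_def)
lemma len_YZ: "length xs = Yc xs + Zc xs"
  by (induction xs) (auto simp: Yc_def Zc_def)

definition inW :: "bool list \<Rightarrow> bool list \<Rightarrow> bool" where
  "inW w x \<longleftrightarrow> (\<exists>as. x = w @ concat (map (\<lambda>a. replicate a True @ w) as))"

definition blt :: "(nat \<Rightarrow> bool) \<Rightarrow> bool list \<Rightarrow> bool" where
  "blt V w \<longleftrightarrow> inF w \<and> (\<forall>N. \<exists>Q. inW w Q \<and> N \<le> length Q \<and> is_prefix Q V)"

lemma counts_W:
  "Zc (w @ concat (map (\<lambda>a. replicate a True @ w) as)) = (length as + 1) * Zc w \<and>
   (length as + 1) * Yc w \<le> Yc (w @ concat (map (\<lambda>a. replicate a True @ w) as))"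
  by (induction as) auto

lemma len_W: "w \<noteq> [] \<Longrightarrow> length as \<le> length (concat (map (\<lambda>a. replicate a True @ w) as))"
proof (induction as)
  case (Cons a as)
  then have "length w \<ge> 1" by (simp add: Suc_le_eq)
  moreover have "length (concat (map (\<lambda>a. replicate a True @ w) (a#as))) = a + length w + length (concat (map (\<lambda>a. replicate a True @ w) as))" by simp
  moreover have "length as \<le> length (concat (map (\<lambda>a. replicate a True @ w) as))" using Cons by simp
  ultimately show ?case by simp
qed simp

lemma core:
  assumes "Q = w @ concat (map (\<lambda>a. replicate a True @ w) as)" "Q = P @ zs"
  shows "\<exists>k. Zc P \<le> (k+1) * Zc w \<and> k * Yc w \<le> Yc P"
  using assms
proof (induction as arbitrary: P zs Q rule: rev_induct)
  case Nil
  then have "w = P @ zs" by simp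
  then have "Zc P + Zc zs = Zc w" by simp
  then have "Zc P \<le> Zc w" by simp
  then show ?case by (intro exI[of _ 0]) simp
next
  case (snoc a as)
  define Qs where "Qs = w @ concat (map (\<lambda>a. replicate a True @ w) as)"
  have Q: "Q = Qs @ (replicate a True @ w)" using snoc.prems Qs_def by simp
  have "P @ zs = Qs @ (replicate a True @ w)" using Q snoc.prems by simp
  then obtain us where "(Qs = P @ us) \<or> (P = Qs @ us \<and> replicate a True @ w = us @ zs)"
    unfolding append_eq_append_conv2 by metis
  then show ?case
  proof
    assume "Qs = P @ us" then show ?thesis using snoc.IH[OF Qs_def] by blast
  next
    assume h: "P = Qs @ us \<and> replicate a True @ w = us @ zs"
    have "Zc us \<le> Zc w" using arg_cong[OF conjunct2[OF h], of Zc] by simp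
    moreover have "Zc Qs = (length as + 1) * Zc w" "(length as + 1) * Yc w \<le> Yc Qs"
      using counts_W[of w as] Qs_def by auto
    ultimately show ?thesis using h by (intro exI[of _ "length as + 1"]) auto
  qed
qed

lemma prefix_take:
  assumes "is_prefix P V" "is_prefix Q V" "length P \<le> length Q"
  shows "Q = P @ drop (length P) Q"
proof -
  have "take (length P) Q = P"
    using assms by (intro nth_equalityI) (auto simp: is_prefix_def)
  then show ?thesis by (metis append_take_drop_id)
qed

lemma Zc_pos: "P \<noteq> [] \<Longrightarrow> last P = False \<Longrightarrow> Zc P \<ge> 1"
proof -
  assume a: "P \<noteq> []" "last P = False"
  have "Zc P = Zc (butlast P) + Zc [last P]" by (metis Zc_app append_butlast_last_id a(1))
  then show ?thesis using a(2) by (simp add: Zc_def)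
qed

lemma rho_nonneg: "rho P \<ge> 0" by (simp add: rho_def)

lemma rho_gt:
  assumes "Zc P \<ge> 1" "r * real (Zc P) < real (Yc P)"
  shows "r < rho P"
proof -
  have "real (Zc P) > 0" using assms(1) by simp
  then show ?thesis using assms(2) by (simp add: rho_def pos_less_divide_eq)
qed

lemma LB:
  assumes b: "blt V w" and r: "r < rho w"
  shows "\<exists>N. \<forall>P. is_prefix P V \<and> P \<noteq> [] \<and> last P = False \<and> N \<le> length P \<longrightarrow> r < rho P"
proof (cases "r < 0")
  case True
  then show ?thesis using rho_nonneg by (meson less_le_trans)
next
  case False
  then have r0: "r \<ge> 0" by simp
  have iw: "inF w" using b by (simp add: blt_def)
  then have Z1: "Zc w \<ge> 1" using Zc_pos by (simp add: inF_def)
  define Y where "Y = real (Yc w)"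
  define Z where "Z = real (Zc w)"
  have Zp: "Z > 0" using Z1 Z_def by simp
  have "r < Y / Z" using r by (simp add: rho_def Y_def Z_def)
  then have "r * Z < Y" using Zp by (simp add: pos_less_divide_eq)
  then have d: "Y - r * Z > 0" by simp
  obtain K :: nat where K: "r * Z < real K * (Y - r * Z)"
    using reals_Archimedean3[OF d] by blast
  define N where "N = K * Zc w + nat \<lceil>r * real K * Z\<rceil> + 1"
  show ?thesis
  proof (intro exI[of _ N] allI impI)
    fix P assume P: "is_prefix P V \<and> P \<noteq> [] \<and> last P = False \<and> N \<le> length P"
    obtain Q where Q: "inW w Q" "length P \<le> length Q" "is_prefix Q V"
      using b unfolding blt_def by blast
    have QP: "Q = P @ drop (length P) Q" using prefix_take P Q by blast
    obtain as where as: "Q = w @ concat (map (\<lambda>a. replicate a True @ w) as)"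
      using Q(1) inW_def by blast
    obtain k where k: "Zc P \<le> (k+1) * Zc w" "k * Yc w \<le> Yc P"
      using core[OF as QP] by blast
    have P1: "Zc P \<ge> 1" using Zc_pos P by blast
    have kZ: "real (Zc P) \<le> (real k + 1) * Z" using k(1) Z_def
      by (metis of_nat_1 of_nat_add of_nat_le_iff of_nat_mult)
    have kY: "real k * Y \<le> real (Yc P)" using k(2) Y_def
      by (metis of_nat_le_iff of_nat_mult)
    show "r < rho P"
    proof (rule rho_gt[OF P1])
      show "r * real (Zc P) < real (Yc P)"
      proof (cases "K \<le> k")
        case True
        have "r * real (Zc P) \<le> r * ((real k + 1) * Z)" using kZ r0 by (simp add: mult_left_mono)
        also have "\<dots> = r * Z + real k * (r * Z)" by (simp add: algebra_simps)
        also have "\<dots> < real K * (Y - r * Z) + real k * (r * Z)" using K by simp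
        also have "\<dots> \<le> real k * (Y - r * Z) + real k * (r * Z)"
          using True d by (simp add: mult_right_mono)
        also have "\<dots> = real k * Y" by (simp add: algebra_simps)
        finally show ?thesis using kY by simp
      next
        case False
        then have "k + 1 \<le> K" by simp
        then have "Zc P \<le> K * Zc w" using k(1) by (meson le_trans mult_le_mono1)
        moreover have "length P = Yc P + Zc P" by (rule len_YZ)
        ultimately have "Yc P \<ge> nat \<lceil>r * real K * Z\<rceil> + 1" using P N_def by linarith
        then have "real (Yc P) \<ge> real (nat \<lceil>r * real K * Z\<rceil>) + 1" by linarith
        moreover have "real (nat \<lceil>r * real K * Z\<rceil>) \<ge> r * real K * Z"
          by (metis le_nat_floor real_nat_ceiling_ge)
        moreover have "real (Zc P) \<le> real K * Z"
          using \<open>Zc P \<le> K * Zc w\<close> Z_def by (metis of_nat_le_iff of_nat_mult)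
        then have "r * real (Zc P) \<le> r * real K * Z" using r0
          by (metis mult.assoc mult_left_mono)
        ultimately show ?thesis by linarith
      qed
    qed
  qed
qed

lemma W_join: "inW w x \<Longrightarrow> inW w y \<Longrightarrow> inW w (x @ replicate a True @ y)"
proof -
  assume "inW w x" "inW w y"
  then obtain as bs where x: "x = w @ concat (map (\<lambda>a. replicate a True @ w) as)"
    and y: "y = w @ concat (map (\<lambda>a. replicate a True @ w) bs)" unfolding inW_def by blast
  have "x @ replicate a True @ y = w @ concat (map (\<lambda>a. replicate a True @ w) (as @ [a] @ bs))"
    using x y by simp
  then show ?thesis unfolding inW_def by blast
qed

lemma W_concat: "inW w v \<Longrightarrow> inW w z \<Longrightarrow> inW w (z @ concat (map (\<lambda>a. replicate a True @ v) as))"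
proof (induction as arbitrary: z)
  case Nil then show ?case by simp
next
  case (Cons a as)
  have "inW w (z @ replicate a True @ v)" using W_join Cons.prems by blast
  then have "inW w ((z @ replicate a True @ v) @ concat (map (\<lambda>a. replicate a True @ v) as))"
    using Cons.IH Cons.prems by blast
  then show ?case by simp
qed

lemma W_refl: "inW w w" unfolding inW_def by (intro exI[of _ "[]"]) simp

lemma W_built: "inW w v \<Longrightarrow> built_from u v \<Longrightarrow> inW w u"
  unfolding built_from_def using W_concat by blast

lemma gen_W: assumes "generating_seq us" "m \<le> n" shows "inW (us m) (us n)"
  using assms(2)
proof (induction n rule: dec_induct)
  case base then show ?case by (rule W_refl)
next
  case (step n)
  then show ?case using W_built assms(1) unfolding generating_seq_def by blast
qed

lemma built_len: "v \<noteq> [] \<Longrightarrow> built_from u v \<Longrightarrow> length v < length u"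
  unfolding built_from_def by (auto simp: neq_Nil_conv)

lemma gen_len: assumes "generating_seq us" shows "n < length (us n)"
proof (induction n)
  case 0 then show ?case using assms by (simp add: generating_seq_def)
next
  case (Suc n)
  have "us n \<noteq> []" using assms by (simp add: generating_seq_def inF_def)
  then have "length (us n) < length (us (Suc n))"
    using built_len assms by (simp add: generating_seq_def)
  then show ?case using Suc by simp
qed

lemma gen_blt: assumes "generating_seq_of V us" shows "blt V (us m)"
  unfolding blt_def
proof (intro conjI allI)
  show "inF (us m)" using assms by (simp add: generating_seq_of_def generating_seq_def)
  fix N
  have g: "generating_seq us" using assms by (simp add: generating_seq_of_def)
  show "\<exists>Q. inW (us m) Q \<and> N \<le> length Q \<and> is_prefix Q V"
    using gen_W[OF g, of m "m + N"] gen_len[OF g, of "m + N"] assms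
    by (intro exI[of _ "us (m + N)"]) (auto simp: generating_seq_of_def)
qed

lemma len_W2: "w \<noteq> [] \<Longrightarrow> length as \<le> length (w @ concat (map (\<lambda>a. replicate a True @ w) as))"
  using len_W[of w as] by simp

lemma inf_blt: assumes "inF v" "inf_built_from V v" shows "blt V v"
  unfolding blt_def
proof (intro conjI allI)
  show "inF v" by fact
  fix N
  obtain a where a: "\<And>k. is_prefix (v @ concat (map (\<lambda>i. replicate (a i) True @ v) [0..<k])) V"
    using assms(2) unfolding inf_built_from_def by blast
  define as where "as = map a [0..<N]"
  have e: "v @ concat (map (\<lambda>i. replicate (a i) True @ v) [0..<N]) =
           v @ concat (map (\<lambda>x. replicate x True @ v) as)" by (simp add: as_def comp_def)
  have "v \<noteq> []" using assms(1) by (simp add: inF_def)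
  then have "length as \<le> length (v @ concat (map (\<lambda>x. replicate x True @ v) as))" by (rule len_W2)
  moreover have "length as = N" by (simp add: as_def)
  ultimately show "\<exists>Q. inW v Q \<and> N \<le> length Q \<and> is_prefix Q V"
    using a[of N] e unfolding inW_def by (metis)
qed

lemma blt_prefix: assumes "blt V w" shows "is_prefix w V"
proof -
  obtain Q where Q: "inW w Q" "is_prefix Q V" using assms unfolding blt_def by blast
  then obtain as where "Q = w @ concat (map (\<lambda>a. replicate a True @ w) as)" unfolding inW_def by blast
  then show ?thesis using Q(2) unfolding is_prefix_def by (auto simp: nth_append)
qed

lemma rho_step: assumes "inF v" "built_from u v" shows "rho v \<le> rho u"
proof -
  obtain as where u: "u = v @ concat (map (\<lambda>a. replicate a True @ v) as)"
    using assms(2) unfolding built_from_def by blast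
  define q where "q = length as + 1"
  have c: "Zc u = q * Zc v" "q * Yc v \<le> Yc u" using counts_W[of v as] u q_def by auto
  have Z1: "Zc v \<ge> 1" using assms(1) Zc_pos by (simp add: inF_def)
  have qp: "real q > 0" using q_def by simp
  have Zp: "real (Zc v) > 0" using Z1 by simp
  have "rho v = (real q * real (Yc v)) / (real q * real (Zc v))"
    using qp by (simp add: rho_def)
  also have "\<dots> \<le> real (Yc u) / (real q * real (Zc v))"
    using c(2) qp Zp by (intro divide_right_mono) (metis of_nat_le_iff of_nat_mult, simp)
  also have "\<dots> = rho u" using c(1) by (simp add: rho_def)
  finally show ?thesis .
qed

lemma CONV:
  fixes P :: "nat \<Rightarrow> bool list"
  assumes b: "\<And>n. blt V (P n)" and l: "\<And>n. n \<le> length (P n)"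
  shows "(\<lambda>n. ereal (rho (P n))) \<longlonglongrightarrow> Sup ((\<lambda>w. ereal (rho w)) ` {w. blt V w})"
    (is "_ \<longlonglongrightarrow> ?S")
proof (rule order_tendstoI)
  fix a assume "?S < a"
  moreover have "\<And>n. ereal (rho (P n)) \<le> ?S" using b by (intro SUP_upper) auto
  ultimately show "eventually (\<lambda>n. ereal (rho (P n)) < a) sequentially"
    by (meson le_less_trans always_eventually)
next
  fix a assume "a < ?S"
  then obtain w where w: "blt V w" "a < ereal (rho w)" by (auto simp: less_SUP_iff)
  show "eventually (\<lambda>n. a < ereal (rho (P n))) sequentially"
  proof (cases a)
    case (real r)
    then have "r < rho w" using w by simp
    then obtain N where N: "\<And>P. is_prefix P V \<and> P \<noteq> [] \<and> last P = False \<and> N \<le> length P \<Longrightarrow> r < rho P"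
      using LB[OF w(1)] by blast
    show ?thesis unfolding eventually_sequentially
    proof (intro exI[of _ N] allI impI)
      fix n assume "N \<le> n"
      have "inF (P n)" using b by (simp add: blt_def)
      then have "r < rho (P n)" using N[of "P n"] blt_prefix[OF b] l[of n] \<open>N \<le> n\<close>
        by (simp add: inF_def)
      then show "a < ereal (rho (P n))" using real by simp
    qed
  next
    case PInf then show ?thesis using w by simp
  next
    case MInf then show ?thesis by simp
  qed
qed

theorem mainTheorem3:
  fixes V :: "nat \<Rightarrow> bool"
  assumes "V \<in> R_words"
  shows "\<exists>L :: ereal.
           (\<forall>us. generating_seq_of V us \<longrightarrow>
                  mono (\<lambda>m. rho (us m)) \<and> (\<lambda>m. ereal (rho (us m))) \<longlonglongrightarrow> L)
         \<and> (\<forall>vs. strict_mono (\<lambda>n. length (vs n)) \<and> range vs = canonical_set V \<longrightarrow>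
                  (\<lambda>n. ereal (rho (vs n))) \<longlonglongrightarrow> L)"
proof (intro exI[of _ "Sup ((\<lambda>w. ereal (rho w)) ` {w. blt V w})"] conjI allI impI)
  fix us :: "nat \<Rightarrow> bool list" assume us: "generating_seq_of V us"
  then have g: "generating_seq us" by (simp add: generating_seq_of_def)
  show "mono (\<lambda>m. rho (us m))"
  proof (rule incseq_SucI)
    fix n show "rho (us n) \<le> rho (us (Suc n))"
      using rho_step g by (simp add: generating_seq_def)
  qed
  show "(\<lambda>m. ereal (rho (us m))) \<longlonglongrightarrow> Sup ((\<lambda>w. ereal (rho w)) ` {w. blt V w})"
    using CONV[of V us] gen_blt[OF us] gen_len[OF g] by (meson less_imp_le)
next
  fix vs :: "nat \<Rightarrow> bool list" assume vs: "strict_mono (\<lambda>n. length (vs n)) \<and> range vs = canonical_set V"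
  have "\<And>n. vs n \<in> canonical_set V" using vs by blast
  then have "\<And>n. blt V (vs n)" using inf_blt by (simp add: canonical_set_def)
  moreover have "\<And>n::nat. n \<le> length (vs n)" using vs strict_mono_imp_increasing by blast
  ultimately show "(\<lambda>n. ereal (rho (vs n))) \<longlonglongrightarrow> Sup ((\<lambda>w. ereal (rho w)) ` {w. blt V w})"
    by (rule CONV)
qed

end
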